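(* Let $p>1$ and $\phi\in\mathcal A^p(M)$ with weak limit values $\phi_*$. If the measures $|\phi_j|^p\mu_j$ converge weak-* in $C(K)^*$ to a measure $\nu$ on $K$, then $\nu\ge|\phi_*|^p\mu$, i.e. $\nu(X)\ge\int_X|\phi_*|^p\,d\mu$ for every Borel set $X\subset K$.
   Context: $K$ is a compact metric space and $M=\{\mu_j\}_{j\ge1}$ is a sequence of finite positive regular Borel measures on $K$ converging weak-* in $C(K)^*$ (i.e. $\int h\,d\mu_j\to\int h\,d\mu$ for all $h\in C(K)$) to a finite positive Borel measure $\mu$. Write $K_j=\operatorname{supp}\mu_j$ and $K_0=\operatorname{supp}\mu$. A "sequence" $\phi=\{\phi_j\}$ means a sequence of real-valued Borel functions $\phi_j$ on $K_j$. For $p\ge 1$, $\|\phi\|_{L^p(M)}=\limsup_{j\to\infty}\|\phi_j\|_{L^p(K_j,\mu_j)}$. A sequence $\phi$ has weak limit values $\phi_*$ if $\phi_*$ is a $\mu$-integrable function on $K_0$ and $\int_{K_j}h\phi_j\,d\mu_j\to\int_{K_0}h\phi_*\,d\mu$ for every $h\in C(K)$. $\mathcal A(M)$ is the set of sequences having weak limit values, and $\mathcal A^p(M)$ the set of $\phi\in\mathcal A(M)$ with $\|\phi\|_{L^p(M)}<\infty$. *)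

theory Defs
  imports "HOL-Analysis.Analysis"
begin

definition borel_fin_measure_on :: "'a::metric_space set \<Rightarrow> 'a measure \<Rightarrow> bool" where
  "borel_fin_measure_on K \<mu> \<longleftrightarrow> sets \<mu> = sets (restrict_space borel K) \<and> finite_measure \<mu>"

definition msupp :: "'a::metric_space set \<Rightarrow> 'a measure \<Rightarrow> 'a set" where
  "msupp K \<mu> = {x \<in> K. \<forall>e>0. emeasure \<mu> (ball x e \<inter> K) > 0}"

definition weak_star_conv :: "'a::metric_space set \<Rightarrow> (nat \<Rightarrow> 'a measure) \<Rightarrow> 'a measure \<Rightarrow> bool" where
  "weak_star_conv K \<mu>s \<mu> \<longleftrightarrow>
     (\<forall>h::'a \<Rightarrow> real. continuous_on K h \<longrightarrow>
        (\<lambda>j. \<integral>x. h x \<partial>(\<mu>s j)) \<longlonglongrightarrow> (\<integral>x. h x \<partial>\<mu>))"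

definition Lp_norm_on :: "real \<Rightarrow> 'a measure \<Rightarrow> 'a set \<Rightarrow> ('a \<Rightarrow> real) \<Rightarrow> ereal" where
  "Lp_norm_on p \<mu> S f =
     (let I = (\<integral>\<^sup>+x\<in>S. ennreal (\<bar>f x\<bar> powr p) \<partial>\<mu>)
      in if I = \<infinity> then \<infinity> else ereal (enn2real I powr (1 / p)))"

definition Lp_seq_norm :: "real \<Rightarrow> 'a::metric_space set \<Rightarrow> (nat \<Rightarrow> 'a measure) \<Rightarrow> (nat \<Rightarrow> 'a \<Rightarrow> real) \<Rightarrow> ereal" where
  "Lp_seq_norm p K \<mu>s \<phi> = limsup (\<lambda>j. Lp_norm_on p (\<mu>s j) (msupp K (\<mu>s j)) (\<phi> j))"

definition has_weak_limit_values ::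
  "'a::metric_space set \<Rightarrow> (nat \<Rightarrow> 'a measure) \<Rightarrow> 'a measure \<Rightarrow> (nat \<Rightarrow> 'a \<Rightarrow> real) \<Rightarrow> ('a \<Rightarrow> real) \<Rightarrow> bool" where
  "has_weak_limit_values K \<mu>s \<mu> \<phi> \<phi>s \<longleftrightarrow>
     (\<forall>j. \<phi> j \<in> borel_measurable (restrict_space (\<mu>s j) (msupp K (\<mu>s j)))) \<and>
     \<phi>s \<in> borel_measurable (restrict_space \<mu> (msupp K \<mu>)) \<and>
     set_integrable \<mu> (msupp K \<mu>) \<phi>s \<and>
     (\<forall>h::'a \<Rightarrow> real. continuous_on K h \<longrightarrow>
        (\<lambda>j. \<integral>x\<in>msupp K (\<mu>s j). h x * \<phi> j x \<partial>(\<mu>s j)) \<longlonglongrightarrow> (\<integral>x\<in>msupp K \<mu>. h x * \<phi>s x \<partial>\<mu>))"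

end

theory Submission
  imports Defs
begin


definition C01 :: "('a::metric_space \<Rightarrow> real) \<Rightarrow> bool" where
  "C01 u \<longleftrightarrow> continuous_on UNIV u \<and> (\<forall>x. 0 \<le> u x \<and> u x \<le> 1)"

lemma meas_K:
  assumes "sets M = sets (restrict_space borel K)" "f \<in> borel_measurable borel"
  shows "f \<in> borel_measurable M"
proof -
  have "f \<in> borel_measurable (restrict_space borel K)"
    using assms(2) by (rule measurable_restrict_space1)
  then show ?thesis by (subst measurable_cong_sets[OF assms(1) refl])
qed

lemma intg_K:
  assumes "sets M = sets (restrict_space borel K)" "finite_measure M"
    "f \<in> borel_measurable borel" "\<And>x. \<bar>f x\<bar> \<le> B"
  shows "integrable M (f::_\<Rightarrow>real)"
  using finite_measure.integrable_const_bound[OF assms(2), of f B] meas_K[OF assms(1,3)] assms(4)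
  by auto

lemma L1_to0:
  fixes f :: "nat \<Rightarrow> 'a::metric_space \<Rightarrow> real"
  assumes "sets M = sets (restrict_space borel K)" "finite_measure M"
    "\<And>n. f n \<in> borel_measurable borel" "\<And>n x. \<bar>f n x\<bar> \<le> 1" "\<And>x. (\<lambda>n. f n x) \<longlonglongrightarrow> 0"
  shows "(\<lambda>n. \<integral>x. f n x \<partial>M) \<longlonglongrightarrow> 0"
proof -
  have "(\<lambda>n. \<integral>x. f n x \<partial>M) \<longlonglongrightarrow> (\<integral>x. 0 \<partial>M)"
    apply (rule integral_dominated_convergence[where w="\<lambda>x. 1"])
    using assms meas_K[OF assms(1) assms(3)] finite_measure.integrable_const[OF assms(2)]
    by auto
  then show ?thesis by simp
qed

definition Err :: "'a measure \<Rightarrow> 'a measure \<Rightarrow> ('a \<Rightarrow> real) \<Rightarrow> 'a set \<Rightarrow> real" where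
  "Err M N u A = (\<integral>x. \<bar>u x - indicator A x\<bar> \<partial>M) + (\<integral>x. \<bar>u x - indicator A x\<bar> \<partial>N)"

lemma approx_ind:
  fixes M N :: "'a::metric_space measure"
  assumes M: "sets M = sets (restrict_space borel K)" "finite_measure M"
  and N: "sets N = sets (restrict_space borel K)" "finite_measure N"
  and A: "A \<in> sets borel"
  shows "\<forall>e>0. \<exists>u. C01 u \<and> Err M N u A < e"
proof -
  have bm: "\<And>u. C01 u \<Longrightarrow> u \<in> borel_measurable borel"
    unfolding C01_def by (auto intro: borel_measurable_continuous_onI)
  have intgMN: "integrable M f \<and> integrable N f" if "f \<in> borel_measurable borel" "\<And>x. \<bar>f x\<bar> \<le> B" for f :: "_ \<Rightarrow> real" and B
    using intg_K[OF M, of f B] intg_K[OF N, of f B] that by auto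
  have Err_le: "Err M N u A \<le> (\<integral>x. g x \<partial>M) + (\<integral>x. g x \<partial>N)"
    if u: "C01 u" and A: "A \<in> sets borel" and g: "g \<in> borel_measurable borel" "\<And>x. \<bar>g x\<bar> \<le> Bd"
      and le: "\<And>x. \<bar>u x - indicator A x\<bar> \<le> g x" for u A g Bd
  proof -
    have m: "(\<lambda>x. \<bar>u x - indicator A x\<bar>) \<in> borel_measurable borel" using bm[OF u] A by measurable
    have b: "\<bar>\<bar>u x - indicator A x\<bar>\<bar> \<le> 1" for x using u unfolding C01_def by (auto simp: indicator_def)
    show ?thesis unfolding Err_def
      using integral_mono[of M, OF _ _ le] integral_mono[of N, OF _ _ le]
        intgMN[OF m b] intgMN[OF g] by (intro add_mono) auto
  qed
  have base: "\<forall>e>0. \<exists>u. C01 u \<and> Err M N u A < e" if "closed A" for A :: "'a set"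
  proof (cases "A = {}")
    case True
    have "C01 (\<lambda>x. 0)" by (simp add: C01_def)
    then show ?thesis using True by (auto simp: Err_def)
  next
    case False
    define f where "f n x = max 0 (1 - real n * infdist x A)" for n x
    have fC: "C01 (f n)" for n unfolding C01_def f_def
      by (auto intro!: continuous_intros simp: infdist_nonneg)
    have conv: "(\<lambda>n. \<bar>f n x - indicator A x\<bar>) \<longlonglongrightarrow> 0" for x
    proof (cases "x \<in> A")
      case True
      then have "infdist x A = 0" using in_closed_iff_infdist_zero[OF that False] by auto
      then show ?thesis using True by (simp add: f_def)
    next
      case xA: False
      then have pos: "infdist x A > 0" using in_closed_iff_infdist_zero[OF that False] infdist_nonneg[of x A] by auto
      obtain n0 :: nat where "real n0 > 1 / infdist x A" using reals_Archimedean2 by blast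
      have "eventually (\<lambda>n. \<bar>f n x - indicator A x\<bar> = 0) sequentially"
        unfolding eventually_sequentially
      proof (intro exI allI impI)
        fix n assume "n0 \<le> n"
        then have "real n > 1 / infdist x A" using \<open>real n0 > _\<close> by (smt (verit) of_nat_mono)
        then have "real n * infdist x A > 1" using pos by (simp add: field_simps)
        then show "\<bar>f n x - indicator A x\<bar> = 0" using xA by (simp add: f_def)
      qed
      then show ?thesis by (rule tendsto_eventually)
    qed
    have Am: "A \<in> sets borel" using that by auto
    have mf: "(\<lambda>x. \<bar>f n x - indicator A x\<bar>) \<in> borel_measurable borel" for n
      using bm[OF fC] Am by measurable
    have b1: "\<bar>\<bar>f n x - indicator A x\<bar>\<bar> \<le> 1" for n x using fC[of n] unfolding C01_def by (auto simp: indicator_def)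
    have "(\<lambda>n. Err M N (f n) A) \<longlonglongrightarrow> 0 + 0" unfolding Err_def
      by (intro tendsto_add L1_to0[OF M] L1_to0[OF N] mf b1 conv)
    then have lim: "(\<lambda>n. Err M N (f n) A) \<longlonglongrightarrow> 0" by simp
    show ?thesis
    proof (intro allI impI)
      fix e :: real assume "e > 0"
      then obtain n where "Err M N (f n) A < e" using order_tendstoD(2)[OF lim] by (meson eventually_sequentially order_refl)
      then show "\<exists>u. C01 u \<and> Err M N u A < e" using fC by blast
    qed
  qed
  have compl: "\<forall>e>0. \<exists>u. C01 u \<and> Err M N u (UNIV - A) < e" if hA: "\<forall>e>0. \<exists>u. C01 u \<and> Err M N u A < e" for A
  proof (intro allI impI)
    fix e :: real assume "e > 0"
    then obtain u where u: "C01 u" "Err M N u A < e" using hA by blast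
    have "C01 (\<lambda>x. 1 - u x)" using u(1) unfolding C01_def by (auto intro!: continuous_intros)
    moreover have "Err M N (\<lambda>x. 1 - u x) (UNIV - A) = Err M N u A"
    proof -
      have pw: "\<bar>1 - u x - indicator (UNIV - A) x\<bar> = \<bar>u x - indicator A x\<bar>" for x
        by (cases "x \<in> A") (auto simp: indicator_def)
      show ?thesis unfolding Err_def pw ..
    qed
    ultimately show "\<exists>u. C01 u \<and> Err M N u (UNIV - A) < e" using u by auto
  qed
  have un2: "\<forall>e>0. \<exists>u. C01 u \<and> Err M N u (A \<union> B) < e"
    if A: "A \<in> sets borel" "\<forall>e>0. \<exists>u. C01 u \<and> Err M N u A < e"
    and B: "B \<in> sets borel" "\<forall>e>0. \<exists>u. C01 u \<and> Err M N u B < e" for A B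
  proof (intro allI impI)
    fix e :: real assume "e > 0"
    then have e2: "e/2 > 0" by simp
    obtain u where u: "C01 u" "Err M N u A < e/2" using A(2) e2 by blast
    obtain v where v: "C01 v" "Err M N v B < e/2" using B(2) e2 by blast
    have w: "C01 (\<lambda>x. max (u x) (v x))" using u(1) v(1) unfolding C01_def
      by (auto intro!: continuous_intros simp: le_max_iff_disj)
    have "Err M N (\<lambda>x. max (u x) (v x)) (A \<union> B) \<le>
       (\<integral>x. \<bar>u x - indicator A x\<bar> + \<bar>v x - indicator B x\<bar> \<partial>M) + (\<integral>x. \<bar>u x - indicator A x\<bar> + \<bar>v x - indicator B x\<bar> \<partial>N)"
      apply (rule Err_le[of _ _ _ 2, OF w])
      using A B bm[OF u(1)] bm[OF v(1)] apply measurable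
      using u(1) v(1) unfolding C01_def by (auto simp: indicator_def abs_if max_def; smt (verit))+
    also have "\<dots> = Err M N u A + Err M N v B"
    proof -
      have m1: "(\<lambda>x. \<bar>u x - indicator A x\<bar>) \<in> borel_measurable borel" using bm[OF u(1)] A by measurable
      have m2: "(\<lambda>x. \<bar>v x - indicator B x\<bar>) \<in> borel_measurable borel" using bm[OF v(1)] B by measurable
      have b1: "\<bar>\<bar>u x - indicator A x\<bar>\<bar> \<le> 1" for x using u(1) unfolding C01_def by (auto simp: indicator_def)
      have b2: "\<bar>\<bar>v x - indicator B x\<bar>\<bar> \<le> 1" for x using v(1) unfolding C01_def by (auto simp: indicator_def)
      show ?thesis unfolding Err_def using intgMN[OF m1 b1] intgMN[OF m2 b2] by simp
    qed
    finally show "\<exists>u. C01 u \<and> Err M N u (A \<union> B) < e" using w u(2) v(2) by auto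
  qed
  have "A \<in> sigma_sets UNIV (Collect closed)"
    using A unfolding borel_eq_closed by (simp add: sets_measure_of)
  then show ?thesis
  proof (induction rule: sigma_sets.induct)
    case (Basic a) then show ?case using base by auto
  next
    case Empty then show ?case using base by auto
  next
    case (Compl a) then show ?case using compl by auto
  next
    case (Union a)
    have asets: "a i \<in> sets borel" for i
      using Union(1)[of i] unfolding borel_eq_closed by (simp add: sets_measure_of)
    define B where "B n = (\<Union>i<n. a i)" for n
    have Bs: "B n \<in> sets borel" for n unfolding B_def using asets by auto
    have PB: "\<forall>e>0. \<exists>u. C01 u \<and> Err M N u (B n) < e" for n
    proof (induction n)
      case 0 then show ?case using base by (auto simp: B_def)
    next
      case (Suc n)
      have "B (Suc n) = a n \<union> B n" by (auto simp: B_def lessThan_Suc)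
      then show ?case using un2[OF asets Union(2) Bs Suc] by simp
    qed
    define U where "U = (\<Union>i. a i)"
    have Us: "U \<in> sets borel" unfolding U_def using asets by auto
    have mi: "(\<lambda>x. indicator (U - B n) x :: real) \<in> borel_measurable borel" for n using Us Bs by measurable
    have ci: "(\<lambda>n. indicator (U - B n) x :: real) \<longlonglongrightarrow> 0" for x
    proof (cases "x \<in> U")
      case True
      then obtain i where "x \<in> a i" unfolding U_def by auto
      then have "eventually (\<lambda>n. (indicator (U - B n) x :: real) = 0) sequentially"
        unfolding eventually_sequentially B_def by (intro exI[of _ "Suc i"]) (auto simp: indicator_def)
      then show ?thesis by (rule tendsto_eventually)
    next
      case False then show ?thesis by simp
    qed
    have "(\<lambda>n. (\<integral>x. indicator (U - B n) x \<partial>M) + (\<integral>x. indicator (U - B n) x \<partial>N)) \<longlonglongrightarrow> (0::real) + 0"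
    proof (rule tendsto_add)
      have b: "\<bar>indicator (U - B n) x\<bar> \<le> (1::real)" for n x by (simp add: indicator_def)
      show "(\<lambda>n. \<integral>x. (indicator (U - B n) x :: real) \<partial>M) \<longlonglongrightarrow> 0"
        using L1_to0[OF M, of "\<lambda>n x. indicator (U - B n) x", OF mi b ci] .
      show "(\<lambda>n. \<integral>x. (indicator (U - B n) x :: real) \<partial>N) \<longlonglongrightarrow> 0"
        using L1_to0[OF N, of "\<lambda>n x. indicator (U - B n) x", OF mi b ci] .
    qed
    then have lim: "(\<lambda>n. (\<integral>x. indicator (U - B n) x \<partial>M) + (\<integral>x. indicator (U - B n) x \<partial>N)) \<longlonglongrightarrow> (0::real)" by simp
    show ?case unfolding U_def[symmetric]
    proof (intro allI impI)
      fix e :: real assume "e > 0"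
      then obtain n where n: "(\<integral>x. indicator (U - B n) x \<partial>M) + (\<integral>x. indicator (U - B n) x \<partial>N) < (e/2::real)"
        using order_tendstoD(2)[OF lim, of "e/2"] by (meson eventually_sequentially half_gt_zero order_refl)
      obtain u where u: "C01 u" "Err M N u (B n) < e/2" using PB[of n] \<open>e>0\<close> by (meson half_gt_zero)
      have m1: "(\<lambda>x. \<bar>u x - indicator (B n) x\<bar>) \<in> borel_measurable borel" using bm[OF u(1)] Bs by measurable
      have b1: "\<bar>\<bar>u x - indicator (B n) x\<bar>\<bar> \<le> 1" for x using u(1) unfolding C01_def by (auto simp: indicator_def)
      have b2: "\<bar>indicator (U - B n) x\<bar> \<le> (1::real)" for x by (simp add: indicator_def)
      have BU: "B n \<subseteq> U" unfolding B_def U_def by auto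
      have "Err M N u U \<le> (\<integral>x. \<bar>u x - indicator (B n) x\<bar> + indicator (U - B n) x \<partial>M)
          + (\<integral>x. \<bar>u x - indicator (B n) x\<bar> + indicator (U - B n) x \<partial>N)"
        apply (rule Err_le[of _ _ _ 2, OF u(1) Us])
        using Us Bs bm[OF u(1)] apply measurable
        using u(1) BU unfolding C01_def by (auto simp: indicator_def; smt (verit))+
      also have "\<dots> = Err M N u (B n) + ((\<integral>x. indicator (U - B n) x \<partial>M) + (\<integral>x. indicator (U - B n) x \<partial>N))"
        unfolding Err_def using intgMN[OF m1 b1] intgMN[OF mi b2] by simp
      finally show "\<exists>u. C01 u \<and> Err M N u U < e" using u n by auto
    qed
  qed
qed

lemma approx_ind_AE:
  fixes M N :: "'a::metric_space measure"
  assumes M: "sets M = sets (restrict_space borel K)" "finite_measure M"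
  and N: "sets N = sets (restrict_space borel K)" "finite_measure N"
  and A: "A \<in> sets borel"
  shows "\<exists>h. (\<forall>n. C01 (h n)) \<and> (AE x in M. (\<lambda>n. h n x) \<longlonglongrightarrow> indicator A x)
             \<and> (AE x in N. (\<lambda>n. h n x) \<longlonglongrightarrow> indicator A x)"
proof -
  have "\<forall>n. \<exists>u. C01 u \<and> Err M N u A < 1 / Suc n"
    using approx_ind[OF M N A] by simp
  then obtain h where h: "\<And>n. C01 (h n)" "\<And>n. Err M N (h n) A < 1 / Suc n" by metis
  have bm: "\<And>u. C01 u \<Longrightarrow> u \<in> borel_measurable borel"
    unfolding C01_def by (auto intro: borel_measurable_continuous_onI)
  have mu: "(\<lambda>x. h n x - indicator A x) \<in> borel_measurable borel" for n using bm[OF h(1)] A by measurable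
  have bu: "\<bar>h n x - indicator A x\<bar> \<le> 1" for n x using h(1)[of n] unfolding C01_def by (auto simp: indicator_def)
  have iM: "integrable M (\<lambda>x. h n x - indicator A x)" for n using intg_K[OF M mu bu] .
  have iN: "integrable N (\<lambda>x. h n x - indicator A x)" for n using intg_K[OF N mu bu] .
  have lim1: "(\<lambda>n. 1 / real (Suc n)) \<longlonglongrightarrow> 0" using LIMSEQ_inverse_real_of_nat by (simp add: inverse_eq_divide)
  have eM: "(\<lambda>n. \<integral>x. norm (h n x - indicator A x) \<partial>M) \<longlonglongrightarrow> 0"
  proof (rule tendsto_sandwich[OF _ _ tendsto_const lim1])
    show "\<forall>\<^sub>F n in sequentially. 0 \<le> (\<integral>x. norm (h n x - indicator A x) \<partial>M)" by auto
    show "\<forall>\<^sub>F n in sequentially. (\<integral>x. norm (h n x - indicator A x) \<partial>M) \<le> 1 / real (Suc n)"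
    proof (intro always_eventually allI)
      fix n
      have "0 \<le> (\<integral>x. \<bar>h n x - indicator A x\<bar> \<partial>N)" by auto
      then show "(\<integral>x. norm (h n x - indicator A x) \<partial>M) \<le> 1 / real (Suc n)"
        using h(2)[of n] unfolding Err_def real_norm_def by linarith
    qed
  qed
  have eN: "(\<lambda>n. \<integral>x. norm (h n x - indicator A x) \<partial>N) \<longlonglongrightarrow> 0"
  proof (rule tendsto_sandwich[OF _ _ tendsto_const lim1])
    show "\<forall>\<^sub>F n in sequentially. 0 \<le> (\<integral>x. norm (h n x - indicator A x) \<partial>N)" by auto
    show "\<forall>\<^sub>F n in sequentially. (\<integral>x. norm (h n x - indicator A x) \<partial>N) \<le> 1 / real (Suc n)"
    proof (intro always_eventually allI)
      fix n
      have "0 \<le> (\<integral>x. \<bar>h n x - indicator A x\<bar> \<partial>M)" by auto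
      then show "(\<integral>x. norm (h n x - indicator A x) \<partial>N) \<le> 1 / real (Suc n)"
        using h(2)[of n] unfolding Err_def real_norm_def by linarith
    qed
  qed
  obtain r1 :: "nat \<Rightarrow> nat" where r1: "strict_mono r1" "AE x in M. (\<lambda>n. h (r1 n) x - indicator A x) \<longlonglongrightarrow> 0"
    using tendsto_L1_AE_subseq[of M "\<lambda>n x. h n x - indicator A x", OF iM eM] by auto
  have eN2: "(\<lambda>n. \<integral>x. norm (h (r1 n) x - indicator A x) \<partial>N) \<longlonglongrightarrow> 0"
    using LIMSEQ_subseq_LIMSEQ[OF eN r1(1)] by (simp add: o_def)
  obtain r2 :: "nat \<Rightarrow> nat" where r2: "strict_mono r2" "AE x in N. (\<lambda>n. h (r1 (r2 n)) x - indicator A x) \<longlonglongrightarrow> 0"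
    using tendsto_L1_AE_subseq[of N "\<lambda>n x. h (r1 n) x - indicator A x", OF iN eN2] by auto
  show ?thesis
  proof (intro exI[of _ "\<lambda>n. h (r1 (r2 n))"] conjI allI)
    show "C01 (h (r1 (r2 n)))" for n by (rule h(1))
    show "AE x in M. (\<lambda>n. h (r1 (r2 n)) x) \<longlonglongrightarrow> indicator A x"
      using r1(2)
    proof eventually_elim
      case (elim x)
      then have "(\<lambda>n. h (r1 (r2 n)) x - indicator A x) \<longlonglongrightarrow> 0"
        using LIMSEQ_subseq_LIMSEQ[OF elim r2(1)] by (simp add: o_def)
      then show ?case by (simp add: LIM_zero_iff)
    qed
    show "AE x in N. (\<lambda>n. h (r1 (r2 n)) x) \<longlonglongrightarrow> indicator A x"
      using r2(2) by eventually_elim (simp add: LIM_zero_iff)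
  qed
qed



lemma msupp_sub: "msupp K M \<subseteq> K" unfolding msupp_def by auto

lemma msupp_closed:
  fixes K :: "'a::metric_space set"
  assumes "closed K" "sets M = sets (restrict_space borel K)"
  shows "closed (msupp K M)"
proof -
  have sK: "ball y r \<inter> K \<in> sets M" for y r
    using assms by (auto simp: sets_restrict_space)
  show ?thesis unfolding closed_limpt
  proof (intro allI impI)
    fix x assume lp: "x islimpt msupp K M"
    then have "x islimpt K" using msupp_sub islimpt_subset by blast
    then have xK: "x \<in> K" using assms(1) closed_limpt by blast
    show "x \<in> msupp K M" unfolding msupp_def
    proof (intro CollectI conjI allI impI xK)
      fix e :: real assume "e > 0"
      then obtain y where y: "y \<in> msupp K M" "dist y x < e/2"
        using lp unfolding islimpt_approachable by (meson half_gt_zero)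
      have "0 < emeasure M (ball y (e/2) \<inter> K)" using y(1) \<open>e>0\<close> unfolding msupp_def by auto
      also have "\<dots> \<le> emeasure M (ball x e \<inter> K)"
      proof (rule emeasure_mono[OF _ sK])
        show "ball y (e/2) \<inter> K \<subseteq> ball x e \<inter> K"
          using y(2) by (auto simp: ball_def dist_commute intro: dist_triangle_half_r)
      qed
      finally show "0 < emeasure M (ball x e \<inter> K)" .
    qed
  qed
qed

lemma int_split:
  fixes f :: "'b \<Rightarrow> 'a \<Rightarrow> real"
  assumes "finite V" "\<And>v. v \<in> V \<Longrightarrow> integrable M (f v)"
    "\<And>x. x \<in> space M \<Longrightarrow> F x = (\<Sum>v\<in>V. f v x)"
  shows "integral\<^sup>L M F = (\<Sum>v\<in>V. integral\<^sup>L M (f v))"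
proof -
  have "integral\<^sup>L M F = (\<integral>x. (\<Sum>v\<in>V. f v x) \<partial>M)" using assms(3) by (rule Bochner_Integration.integral_cong[OF refl])
  also have "\<dots> = (\<Sum>v\<in>V. integral\<^sup>L M (f v))" by (rule Bochner_Integration.integral_sum) (use assms in auto)
  finally show ?thesis .
qed

lemma ind_split:
  fixes g :: "'a \<Rightarrow> real" and F :: "real \<Rightarrow> real"
  assumes "x \<in> K" "finite (g ` K)"
  shows "indicator Y x * F (g x) = (\<Sum>v\<in>g ` K. indicator (Y \<inter> (g -` {v} \<inter> K)) x * F v)"
proof -
  have "(\<Sum>v\<in>g ` K. indicator (Y \<inter> (g -` {v} \<inter> K)) x * F v) = (\<Sum>v\<in>g ` K. if v = g x then indicator Y x * F v else 0)"
    using assms(1) by (intro sum.cong) (auto simp: indicator_def)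
  also have "\<dots> = indicator Y x * F (g x)" using assms by (simp add: sum.delta')
  finally show ?thesis by simp
qed


lemma pw_a:
  fixes y N p :: real
  assumes "1 < p" "0 \<le> N"
  shows "min \<bar>y\<bar> N powr p \<le> (sgn y * min \<bar>y\<bar> N powr (p-1)) * y"
proof -
  define m where "m = min \<bar>y\<bar> N"
  have m0: "0 \<le> m" "m \<le> \<bar>y\<bar>" using assms unfolding m_def by auto
  have "(sgn y * m powr (p-1)) * y = \<bar>y\<bar> * m powr (p-1)"
    by (metis abs_sgn mult.commute mult.left_commute)
  moreover have "m powr p \<le> \<bar>y\<bar> * m powr (p-1)"
  proof (cases "m = 0")
    case True then show ?thesis by simp
  next
    case False
    have "m powr (1 + (p-1)) = m powr 1 * m powr (p-1)" by (rule powr_add)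
    then have "m powr p = m * m powr (p-1)" using m0 by simp
    then show ?thesis using m0 by (simp add: mult_right_mono)
  qed
  ultimately show ?thesis unfolding m_def[symmetric] by linarith
qed

lemma pw_b:
  fixes y N p q :: real
  assumes "1 < p" "0 \<le> N" "(p-1)*q = p"
  shows "\<bar>sgn y * min \<bar>y\<bar> N powr (p-1)\<bar> powr q = min \<bar>y\<bar> N powr p"
proof (cases "y = 0")
  case True then show ?thesis using assms(2) by simp
next
  case False
  then have "\<bar>sgn y * min \<bar>y\<bar> N powr (p-1)\<bar> = min \<bar>y\<bar> N powr (p-1)" by (simp add: abs_mult)
  then show ?thesis using assms(3) by (simp add: powr_powr)
qed



theorem theorem2p2:
  fixes K :: "'a::metric_space set"
    and \<mu>s :: "nat \<Rightarrow> 'a measure" and \<mu> \<nu> :: "'a measure"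
    and \<phi> :: "nat \<Rightarrow> 'a \<Rightarrow> real" and \<phi>s :: "'a \<Rightarrow> real" and p :: real
  assumes "compact K"
    and "\<And>j. borel_fin_measure_on K (\<mu>s j)"
    and "borel_fin_measure_on K \<mu>"
    and "weak_star_conv K \<mu>s \<mu>"
    and "p > 1"
    and "has_weak_limit_values K \<mu>s \<mu> \<phi> \<phi>s"
    and "Lp_seq_norm p K \<mu>s \<phi> < \<infinity>"
    and "borel_fin_measure_on K \<nu>"
    and "\<And>h::'a \<Rightarrow> real. continuous_on K h \<Longrightarrow>
           (\<lambda>j. \<integral>x\<in>msupp K (\<mu>s j). h x * \<bar>\<phi> j x\<bar> powr p \<partial>(\<mu>s j)) \<longlonglongrightarrow> (\<integral>x. h x \<partial>\<nu>)"
  shows "\<forall>X \<in> sets (restrict_space borel K).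
           (\<integral>\<^sup>+x\<in>X \<inter> msupp K \<mu>. ennreal (\<bar>\<phi>s x\<bar> powr p) \<partial>\<mu>) \<le> emeasure \<nu> X"
proof -
  note cpt = assms(1) and p1 = assms(5) and wlv = assms(6)
  have Kc: "closed K" using cpt by (rule compact_imp_closed)
  then have Kb: "K \<in> sets borel" by auto
  have setsK: "Y \<in> sets (restrict_space borel K) \<longleftrightarrow> Y \<subseteq> K \<and> Y \<in> sets borel" for Y
    using Kb by (intro sets_restrict_space_iff) auto
  have sj: "sets (\<mu>s j) = sets (restrict_space borel K)" and fj: "finite_measure (\<mu>s j)" for j
    using assms(2)[of j] unfolding borel_fin_measure_on_def by auto
  have sm: "sets \<mu> = sets (restrict_space borel K)" and fm: "finite_measure \<mu>"
    using assms(3) unfolding borel_fin_measure_on_def by auto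
  have sn: "sets \<nu> = sets (restrict_space borel K)" and fn: "finite_measure \<nu>"
    using assms(8) unfolding borel_fin_measure_on_def by auto
  have spK: "space M = K" if "sets M = sets (restrict_space borel K)" for M :: "'a measure"
    using sets_eq_imp_space_eq[OF that] by (simp add: space_restrict_space)
  have spj: "space (\<mu>s j) = K" for j using spK[OF sj] .
  have spm: "space \<mu> = K" using spK[OF sm] .
  have spn: "space \<nu> = K" using spK[OF sn] .
  define K0 where "K0 = msupp K \<mu>"
  define Kj where "Kj j = msupp K (\<mu>s j)" for j
  have K0s: "K0 \<in> sets \<mu>" unfolding K0_def sm setsK
    using msupp_closed[OF Kc sm] msupp_sub by auto
  have Kjs: "Kj j \<in> sets (\<mu>s j)" for j unfolding Kj_def sj setsK
    using msupp_closed[OF Kc sj] msupp_sub by auto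
  define q where "q = p / (p - 1)"
  have q1: "q > 1" using p1 unfolding q_def by (simp add: field_simps)
  have pq: "1/p + 1/q = 1" using p1 unfolding q_def by (simp add: field_simps)
  have pq2: "(p - 1) * q = p" using p1 unfolding q_def by (simp add: field_simps)
  have phim: "\<phi> j \<in> borel_measurable (restrict_space (\<mu>s j) (Kj j))" for j
    using wlv unfolding has_weak_limit_values_def Kj_def by auto
  have phism: "\<phi>s \<in> borel_measurable (restrict_space \<mu> K0)"
    and phisi: "set_integrable \<mu> K0 \<phi>s"
    and wlim: "\<And>h. continuous_on K h \<Longrightarrow>
        (\<lambda>j. \<integral>x\<in>Kj j. h x * \<phi> j x \<partial>(\<mu>s j)) \<longlonglongrightarrow> (\<integral>x\<in>K0. h x * \<phi>s x \<partial>\<mu>)"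
    using wlv unfolding has_weak_limit_values_def Kj_def K0_def by auto
  have wsc: "\<And>h::'a\<Rightarrow>real. continuous_on K h \<Longrightarrow> (\<lambda>j. \<integral>x. h x \<partial>(\<mu>s j)) \<longlonglongrightarrow> (\<integral>x. h x \<partial>\<mu>)"
    using assms(4) unfolding weak_star_conv_def by auto
  have nlim: "\<And>h. continuous_on K h \<Longrightarrow>
           (\<lambda>j. \<integral>x\<in>Kj j. h x * \<bar>\<phi> j x\<bar> powr p \<partial>(\<mu>s j)) \<longlonglongrightarrow> (\<integral>x. h x \<partial>\<nu>)"
    using assms(9) unfolding Kj_def by auto
  define \<psi> where "\<psi> x = indicator K0 x * \<phi>s x" for x
  have psim: "\<psi> \<in> borel_measurable \<mu>"
    using phism borel_measurable_restrict_space_iff[of K0 \<mu> \<phi>s] K0s spm unfolding \<psi>_def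
    by (simp add: Int_absorb2 msupp_sub K0_def)
  have psii: "integrable \<mu> \<psi>" using phisi unfolding set_integrable_def \<psi>_def by simp
  define \<psi>j where "\<psi>j j x = indicator (Kj j) x * \<phi> j x" for j x
  have psijm: "\<psi>j j \<in> borel_measurable (\<mu>s j)" for j
    using phim[of j] borel_measurable_restrict_space_iff[of "Kj j" "\<mu>s j" "\<phi> j"] Kjs[of j] spj unfolding \<psi>j_def
    by (simp add: Int_absorb2 msupp_sub Kj_def)
  have evfin: "eventually (\<lambda>j. (\<integral>\<^sup>+x\<in>Kj j. ennreal (\<bar>\<phi> j x\<bar> powr p) \<partial>(\<mu>s j)) \<noteq> \<infinity>) sequentially"
  proof -
    have "eventually (\<lambda>j. Lp_norm_on p (\<mu>s j) (msupp K (\<mu>s j)) (\<phi> j) < \<infinity>) sequentially"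
      using assms(7) unfolding Lp_seq_norm_def by (intro Limsup_lessD) auto
    then show ?thesis
      by eventually_elim (auto simp: Lp_norm_on_def Let_def Kj_def split: if_splits)
  qed
  have evint: "eventually (\<lambda>j. integrable (\<mu>s j) (\<lambda>x. \<bar>\<psi>j j x\<bar> powr p) \<and> integrable (\<mu>s j) (\<psi>j j)) sequentially"
    using evfin
  proof eventually_elim
    case (elim j)
    have m1: "(\<lambda>x. \<bar>\<psi>j j x\<bar> powr p) \<in> borel_measurable (\<mu>s j)" using psijm[of j] by measurable
    have eq: "(\<integral>\<^sup>+x. ennreal (norm (\<bar>\<psi>j j x\<bar> powr p)) \<partial>(\<mu>s j)) = (\<integral>\<^sup>+x\<in>Kj j. ennreal (\<bar>\<phi> j x\<bar> powr p) \<partial>(\<mu>s j))"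
      using p1 by (intro nn_integral_cong) (auto simp: \<psi>j_def indicator_def)
    have i1: "integrable (\<mu>s j) (\<lambda>x. \<bar>\<psi>j j x\<bar> powr p)"
      by (rule integrableI_bounded[OF m1]) (use elim eq in \<open>simp add: top.not_eq_extremum\<close>)
    have i2: "integrable (\<mu>s j) (\<lambda>x. 1 + \<bar>\<psi>j j x\<bar> powr p)"
      using i1 finite_measure.integrable_const[OF fj] by (intro Bochner_Integration.integrable_add) auto
    have "integrable (\<mu>s j) (\<psi>j j)"
    proof (rule Bochner_Integration.integrable_bound[OF i2 psijm], intro AE_I2)
      fix x
      have "\<bar>\<psi>j j x\<bar> \<le> 1 + \<bar>\<psi>j j x\<bar> powr p"
      proof (cases "\<bar>\<psi>j j x\<bar> \<le> 1")
        case False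
        then have "\<bar>\<psi>j j x\<bar> powr 1 \<le> \<bar>\<psi>j j x\<bar> powr p" using p1 by (intro powr_mono) auto
        then show ?thesis using False by simp
      next
        case True then show ?thesis using powr_ge_zero[of "\<bar>\<psi>j j x\<bar>" p] by linarith
      qed
      then show "norm (\<psi>j j x) \<le> norm (1 + \<bar>\<psi>j j x\<bar> powr p)" by simp
    qed
    with i1 show ?case by simp
  qed
  have stepA: "c * (\<integral>x. h x * \<psi> x \<partial>\<mu>) \<le> 1/p * (\<integral>x. h x \<partial>\<nu>) + 1/q * \<bar>c\<bar> powr q * (\<integral>x. h x \<partial>\<mu>)"
    if h: "C01 h" for h c
  proof -
    have hcU: "continuous_on UNIV h" and h01: "\<And>x. 0 \<le> h x" "\<And>x. h x \<le> 1" using h unfolding C01_def by auto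
    have hc: "continuous_on K h" using hcU by (rule continuous_on_subset) auto
    have hbm: "h \<in> borel_measurable borel" using hcU by (rule borel_measurable_continuous_onI)
    have hmj: "h \<in> borel_measurable (\<mu>s j)" for j using meas_K[OF sj hbm] .
    have hij: "integrable (\<mu>s j) h" for j using intg_K[OF sj fj hbm, of 1] h01 by (simp add: abs_le_iff)
    have chc: "continuous_on K (\<lambda>x. c * h x)" using hc by (intro continuous_intros)
    have l1: "(\<lambda>j. \<integral>x\<in>Kj j. c * h x * \<phi> j x \<partial>(\<mu>s j)) \<longlonglongrightarrow> (\<integral>x\<in>K0. c * h x * \<phi>s x \<partial>\<mu>)"
      using wlim[OF chc] by simp
    have e1: "(\<integral>x\<in>K0. c * h x * \<phi>s x \<partial>\<mu>) = c * (\<integral>x. h x * \<psi> x \<partial>\<mu>)"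
    proof -
      have "(\<lambda>x. indicator K0 x *\<^sub>R (c * h x * \<phi>s x)) = (\<lambda>x. c * (h x * \<psi> x))"
        by (auto simp: fun_eq_iff \<psi>_def)
      then show ?thesis unfolding set_lebesgue_integral_def by simp
    qed
    have e1j: "(\<integral>x\<in>Kj j. c * h x * \<phi> j x \<partial>(\<mu>s j)) = c * (\<integral>x. h x * \<psi>j j x \<partial>(\<mu>s j))" for j
    proof -
      have "(\<lambda>x. indicator (Kj j) x *\<^sub>R (c * h x * \<phi> j x)) = (\<lambda>x. c * (h x * \<psi>j j x))"
        by (auto simp: fun_eq_iff \<psi>j_def)
      then show ?thesis unfolding set_lebesgue_integral_def by simp
    qed
    have e2j: "(\<integral>x\<in>Kj j. h x * \<bar>\<phi> j x\<bar> powr p \<partial>(\<mu>s j)) = (\<integral>x. h x * \<bar>\<psi>j j x\<bar> powr p \<partial>(\<mu>s j))" for j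
    proof -
      have "(\<lambda>x. indicator (Kj j) x *\<^sub>R (h x * \<bar>\<phi> j x\<bar> powr p)) = (\<lambda>x. h x * \<bar>\<psi>j j x\<bar> powr p)"
        by (auto simp: fun_eq_iff \<psi>j_def indicator_def)
      then show ?thesis unfolding set_lebesgue_integral_def by simp
    qed
    have l2: "(\<lambda>j. \<integral>x. h x * \<bar>\<psi>j j x\<bar> powr p \<partial>(\<mu>s j)) \<longlonglongrightarrow> (\<integral>x. h x \<partial>\<nu>)"
      using nlim[OF hc] by (simp add: e2j)
    have l3: "(\<lambda>j. \<integral>x. h x \<partial>(\<mu>s j)) \<longlonglongrightarrow> (\<integral>x. h x \<partial>\<mu>)" using wsc[OF hc] .
    have R: "(\<lambda>j. 1/p * (\<integral>x. h x * \<bar>\<psi>j j x\<bar> powr p \<partial>(\<mu>s j)) + 1/q * \<bar>c\<bar> powr q * (\<integral>x. h x \<partial>(\<mu>s j)))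
        \<longlonglongrightarrow> 1/p * (\<integral>x. h x \<partial>\<nu>) + 1/q * \<bar>c\<bar> powr q * (\<integral>x. h x \<partial>\<mu>)"
      by (intro tendsto_add tendsto_mult_left l2 l3)
    have L: "(\<lambda>j. c * (\<integral>x. h x * \<psi>j j x \<partial>(\<mu>s j))) \<longlonglongrightarrow> c * (\<integral>x. h x * \<psi> x \<partial>\<mu>)"
      using l1 by (simp add: e1 e1j)
    have ev: "eventually (\<lambda>j. c * (\<integral>x. h x * \<psi>j j x \<partial>(\<mu>s j)) \<le>
        1/p * (\<integral>x. h x * \<bar>\<psi>j j x\<bar> powr p \<partial>(\<mu>s j)) + 1/q * \<bar>c\<bar> powr q * (\<integral>x. h x \<partial>(\<mu>s j))) sequentially"
      using evint
    proof eventually_elim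
      case (elim j)
      have ia: "integrable (\<mu>s j) (\<lambda>x. h x * \<bar>\<psi>j j x\<bar> powr p)"
        by (rule Bochner_Integration.integrable_bound[OF conjunct1[OF elim]]) (use hmj psijm h01 in \<open>auto intro!: AE_I2 mult_left_le_one_le\<close>)
      have ib: "integrable (\<mu>s j) (\<lambda>x. c * (h x * \<psi>j j x))"
        apply (intro integrable_mult_right)
        by (rule Bochner_Integration.integrable_bound[OF conjunct2[OF elim]]) (use hmj psijm h01 in \<open>auto intro!: AE_I2 mult_left_le_one_le simp: abs_mult\<close>)
      have "c * (\<integral>x. h x * \<psi>j j x \<partial>(\<mu>s j)) = (\<integral>x. c * (h x * \<psi>j j x) \<partial>(\<mu>s j))" by simp
      also have "\<dots> \<le> (\<integral>x. 1/p * (h x * \<bar>\<psi>j j x\<bar> powr p) + 1/q * \<bar>c\<bar> powr q * h x \<partial>(\<mu>s j))"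
      proof (rule integral_mono[OF ib])
        show "integrable (\<mu>s j) (\<lambda>x. 1/p * (h x * \<bar>\<psi>j j x\<bar> powr p) + 1/q * \<bar>c\<bar> powr q * h x)"
          using ia hij by (intro Bochner_Integration.integrable_add integrable_mult_right)
        fix x
        have "c * \<psi>j j x \<le> \<bar>\<psi>j j x\<bar> * \<bar>c\<bar>" by (simp add: abs_mult[symmetric] mult.commute)
        also have "\<dots> \<le> \<bar>\<psi>j j x\<bar> powr p / p + \<bar>c\<bar> powr q / q"
          by (rule Youngs_inequality[OF p1 q1 pq]) auto
        finally have "h x * (c * \<psi>j j x) \<le> h x * (\<bar>\<psi>j j x\<bar> powr p / p + \<bar>c\<bar> powr q / q)"
          using h01 by (intro mult_left_mono) auto
        then show "c * (h x * \<psi>j j x) \<le> 1/p * (h x * \<bar>\<psi>j j x\<bar> powr p) + 1/q * \<bar>c\<bar> powr q * h x"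
          by (simp add: algebra_simps)
      qed
      also have "\<dots> = 1/p * (\<integral>x. h x * \<bar>\<psi>j j x\<bar> powr p \<partial>(\<mu>s j)) + 1/q * \<bar>c\<bar> powr q * (\<integral>x. h x \<partial>(\<mu>s j))"
        using ia hij by (simp add: Bochner_Integration.integral_add)
      finally show ?case .
    qed
    show ?thesis using tendsto_le[OF sequentially_bot R L ev] .
  qed
  have psiabs: "integrable \<mu> (\<lambda>x. \<bar>\<psi> x\<bar>)" using psii by (rule integrable_abs)
  have indm: "(\<lambda>x. indicator Y x :: real) \<in> borel_measurable M"
    if "Y \<in> sets borel" "sets M = sets (restrict_space borel K)" for Y and M :: "'a measure"
    using meas_K[OF that(2), of "indicator Y"] that(1) by simp
  have stepB: "c * (\<integral>x. indicator Y x * \<psi> x \<partial>\<mu>) \<le> 1/p * (\<integral>x. indicator Y x \<partial>\<nu>) + 1/q * \<bar>c\<bar> powr q * (\<integral>x. indicator Y x \<partial>\<mu>)"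
    if Y: "Y \<in> sets borel" for Y c
  proof -
    obtain hn where hn: "\<And>n. C01 (hn n)" "AE x in \<mu>. (\<lambda>n. hn n x) \<longlonglongrightarrow> indicator Y x"
      "AE x in \<nu>. (\<lambda>n. hn n x) \<longlonglongrightarrow> indicator Y x"
      using approx_ind_AE[OF sm fm sn fn Y] by blast
    have hbm: "hn n \<in> borel_measurable borel" for n using hn(1)[of n] unfolding C01_def
      by (auto intro: borel_measurable_continuous_onI)
    have h01: "0 \<le> hn n x" "hn n x \<le> 1" for n x using hn(1)[of n] unfolding C01_def by auto
    have L: "(\<lambda>n. c * (\<integral>x. hn n x * \<psi> x \<partial>\<mu>)) \<longlonglongrightarrow> c * (\<integral>x. indicator Y x * \<psi> x \<partial>\<mu>)"
    proof (intro tendsto_mult_left integral_dominated_convergence[where w="\<lambda>x. \<bar>\<psi> x\<bar>"])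
      show "(\<lambda>x. indicator Y x * \<psi> x) \<in> borel_measurable \<mu>" using indm[OF Y sm] psim by measurable
      show "(\<lambda>x. hn n x * \<psi> x) \<in> borel_measurable \<mu>" for n using meas_K[OF sm hbm[of n]] psim by measurable
      show "integrable \<mu> (\<lambda>x. \<bar>\<psi> x\<bar>)" by (rule psiabs)
      show "AE x in \<mu>. (\<lambda>n. hn n x * \<psi> x) \<longlonglongrightarrow> indicator Y x * \<psi> x"
        using hn(2) by eventually_elim (rule tendsto_mult_right)
      show "AE x in \<mu>. norm (hn n x * \<psi> x) \<le> \<bar>\<psi> x\<bar>" for n
        using h01 by (intro AE_I2) (auto simp: abs_mult intro!: mult_left_le_one_le)
    qed
    have DC1: "(\<lambda>n. \<integral>x. hn n x \<partial>M) \<longlonglongrightarrow> (\<integral>x. indicator Y x \<partial>M)"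
      if M: "sets M = sets (restrict_space borel K)" "finite_measure M" "AE x in M. (\<lambda>n. hn n x) \<longlonglongrightarrow> indicator Y x"
      for M
    proof (intro integral_dominated_convergence[where w="\<lambda>x. 1"])
      show "(indicator Y :: 'a \<Rightarrow> real) \<in> borel_measurable M" using indm[OF Y M(1)] by simp
      show "hn n \<in> borel_measurable M" for n using meas_K[OF M(1) hbm[of n]] .
      show "integrable M (\<lambda>x. 1::real)" using finite_measure.integrable_const[OF M(2)] .
      show "AE x in M. (\<lambda>n. hn n x) \<longlonglongrightarrow> indicator Y x" by (rule M(3))
      show "AE x in M. norm (hn n x) \<le> 1" for n using h01 by (intro AE_I2) auto
    qed
    have R: "(\<lambda>n. 1/p * (\<integral>x. hn n x \<partial>\<nu>) + 1/q * \<bar>c\<bar> powr q * (\<integral>x. hn n x \<partial>\<mu>))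
       \<longlonglongrightarrow> 1/p * (\<integral>x. indicator Y x \<partial>\<nu>) + 1/q * \<bar>c\<bar> powr q * (\<integral>x. indicator Y x \<partial>\<mu>)"
      by (intro tendsto_add tendsto_mult_left DC1[OF sn fn hn(3)] DC1[OF sm fm hn(2)])
    show ?thesis using tendsto_le[OF sequentially_bot R L] stepA[OF hn(1)] by auto
  qed
  have intind: "integrable M (\<lambda>x. indicator Y x * a :: real)"
    if "Y \<in> sets borel" "sets M = sets (restrict_space borel K)" "finite_measure M" for Y a and M :: "'a measure"
    by (rule intg_K[OF that(2,3), of _ "\<bar>a\<bar>"]) (use that(1) in \<open>auto simp: indicator_def\<close>)
  have intpsi: "integrable \<mu> (\<lambda>x. indicator Y x * \<psi> x)" if "Y \<in> sets borel" for Y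
    by (rule Bochner_Integration.integrable_bound[OF psii]) (use indm[OF that sm] psim in \<open>auto simp: indicator_def\<close>)
  have stepC: "(\<integral>x. indicator Y x * (g x * \<psi> x) \<partial>\<mu>) \<le> 1/p * (\<integral>x. indicator Y x \<partial>\<nu>) + 1/q * (\<integral>x. indicator Y x * \<bar>g x\<bar> powr q \<partial>\<mu>)"
    if g: "simple_function (restrict_space borel K) g" and Y: "Y \<in> sets borel" for g Y
  proof -
    define V where "V = g ` K"
    have spS: "space (restrict_space borel K) = K" by (simp add: space_restrict_space)
    have finV: "finite V" using g unfolding simple_function_def V_def spS by simp
    define Yv where "Yv v = Y \<inter> (g -` {v} \<inter> K)" for v
    have Yvs: "Yv v \<in> sets borel" if "v \<in> V" for v
    proof -
      have "g -` {v} \<inter> K \<in> sets (restrict_space borel K)"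
        using g that unfolding simple_function_def V_def spS by blast
      then show ?thesis unfolding Yv_def using Y setsK by auto
    qed
    have sp: "indicator Y x * F (g x) = (\<Sum>v\<in>V. indicator (Yv v) x * F v)" if "x \<in> K" for x and F :: "real \<Rightarrow> real"
      unfolding V_def Yv_def by (rule ind_split[OF that]) (use finV V_def in simp)
    have "(\<integral>x. indicator Y x * (g x * \<psi> x) \<partial>\<mu>) = (\<Sum>v\<in>V. \<integral>x. indicator (Yv v) x * (v * \<psi> x) \<partial>\<mu>)"
    proof (rule int_split[OF finV])
      show "integrable \<mu> (\<lambda>x. indicator (Yv v) x * (v * \<psi> x))" if "v \<in> V" for v
        using integrable_mult_right[OF intpsi[OF Yvs[OF that]], of v] by (simp add: mult_ac)
      show "indicator Y x * (g x * \<psi> x) = (\<Sum>v\<in>V. indicator (Yv v) x * (v * \<psi> x))" if "x \<in> space \<mu>" for x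
        using sp[of x "\<lambda>t. t * \<psi> x"] that spm by simp
    qed
    also have "\<dots> = (\<Sum>v\<in>V. v * (\<integral>x. indicator (Yv v) x * \<psi> x \<partial>\<mu>))"
      by (intro sum.cong refl) (simp add: mult_ac flip: integral_mult_right_zero)
    also have "\<dots> \<le> (\<Sum>v\<in>V. 1/p * (\<integral>x. indicator (Yv v) x \<partial>\<nu>) + 1/q * \<bar>v\<bar> powr q * (\<integral>x. indicator (Yv v) x \<partial>\<mu>))"
      by (intro sum_mono stepB Yvs)
    also have "\<dots> = 1/p * (\<Sum>v\<in>V. \<integral>x. indicator (Yv v) x \<partial>\<nu>) + 1/q * (\<Sum>v\<in>V. \<integral>x. indicator (Yv v) x * \<bar>v\<bar> powr q \<partial>\<mu>)"
      by (simp add: sum.distrib sum_distrib_left mult_ac)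
    also have "(\<Sum>v\<in>V. \<integral>x. indicator (Yv v) x \<partial>\<nu>) = (\<integral>x. indicator Y x \<partial>\<nu> :: real)"
    proof (rule int_split[OF finV, symmetric])
      show "integrable \<nu> (\<lambda>x. indicator (Yv v) x :: real)" if "v \<in> V" for v
        using intind[OF Yvs[OF that] sn fn, of 1] by simp
      show "indicator Y x = (\<Sum>v\<in>V. indicator (Yv v) x :: real)" if "x \<in> space \<nu>" for x
        using sp[of x "\<lambda>t. 1"] that spn by simp
    qed
    also have "(\<Sum>v\<in>V. \<integral>x. indicator (Yv v) x * \<bar>v\<bar> powr q \<partial>\<mu>) = (\<integral>x. indicator Y x * \<bar>g x\<bar> powr q \<partial>\<mu>)"
    proof (rule int_split[OF finV, symmetric])
      show "integrable \<mu> (\<lambda>x. indicator (Yv v) x * \<bar>v\<bar> powr q)" if "v \<in> V" for v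
        using intind[OF Yvs[OF that] sm fm] by simp
      show "indicator Y x * \<bar>g x\<bar> powr q = (\<Sum>v\<in>V. indicator (Yv v) x * \<bar>v\<bar> powr q)" if "x \<in> space \<mu>" for x
        using sp[of x "\<lambda>t. \<bar>t\<bar> powr q"] that spm by simp
    qed
    finally show ?thesis .
  qed
  have stepD: "(\<integral>x. indicator Y x * min \<bar>\<psi> x\<bar> (real n) powr p \<partial>\<mu>) \<le> (\<integral>x. indicator Y x \<partial>\<nu>)"
    if Y: "Y \<in> sets borel" for Y n
  proof -
    define m where "m x = min \<bar>\<psi> x\<bar> (real n)" for x
    define gs where "gs x = sgn (\<psi> x) * m x powr (p-1)" for x
    define B where "B = real n powr (p-1)"
    have B0: "0 \<le> B" unfolding B_def by simp
    have gsm: "gs \<in> borel_measurable \<mu>" unfolding gs_def m_def using psim by measurable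
    have gsS: "gs \<in> borel_measurable (restrict_space borel K)"
      using gsm by (subst (asm) measurable_cong_sets[OF sm refl])
    have gsb: "\<bar>gs x\<bar> \<le> B" for x
    proof -
      have a1: "\<bar>sgn (\<psi> x)\<bar> \<le> 1" by (auto simp: sgn_real_def)
      have "\<bar>gs x\<bar> = \<bar>sgn (\<psi> x)\<bar> * m x powr (p-1)" unfolding gs_def by (simp add: abs_mult)
      also have "\<dots> \<le> 1 * m x powr (p-1)" using a1 by (intro mult_right_mono) auto
      also have "\<dots> \<le> B" unfolding B_def m_def using p1 by (auto intro!: powr_mono2)
      finally show ?thesis .
    qed
    obtain s where s: "\<And>i. simple_function (restrict_space borel K) (s i)"
      "\<And>x. x \<in> space (restrict_space borel K) \<Longrightarrow> (\<lambda>i. s i x) \<longlonglongrightarrow> gs x"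
      "\<And>i x. x \<in> space (restrict_space borel K) \<Longrightarrow> dist (s i x) 0 \<le> 2 * dist (gs x) 0"
      using borel_measurable_implies_sequence_metric[OF gsS, of 0] by metis
    have spS: "space (restrict_space borel K) = K" by (simp add: space_restrict_space)
    have sm_i: "s i \<in> borel_measurable \<mu>" for i
      using borel_measurable_simple_function[OF s(1)[of i]] by (subst measurable_cong_sets[OF sm refl])
    have sb: "\<bar>s i x\<bar> \<le> 2 * B" if "x \<in> K" for i x
      using s(3)[of x i] that spS gsb[of x] by simp
    have Yb: "(indicator Y :: 'a \<Rightarrow> real) \<in> borel_measurable \<mu>" using indm[OF Y sm] .
    have lim1: "(\<lambda>i. \<integral>x. indicator Y x * (s i x * \<psi> x) \<partial>\<mu>) \<longlonglongrightarrow> (\<integral>x. indicator Y x * (gs x * \<psi> x) \<partial>\<mu>)"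
    proof (rule integral_dominated_convergence[where w="\<lambda>x. 2 * B * \<bar>\<psi> x\<bar>"])
      show "(\<lambda>x. indicator Y x * (gs x * \<psi> x)) \<in> borel_measurable \<mu>" using Yb gsm psim by measurable
      show "(\<lambda>x. indicator Y x * (s i x * \<psi> x)) \<in> borel_measurable \<mu>" for i using Yb sm_i[of i] psim by measurable
      show "integrable \<mu> (\<lambda>x. 2 * B * \<bar>\<psi> x\<bar>)" using psiabs by (rule integrable_mult_right)
      show "AE x in \<mu>. (\<lambda>i. indicator Y x * (s i x * \<psi> x)) \<longlonglongrightarrow> indicator Y x * (gs x * \<psi> x)"
        using s(2) spS spm by (intro AE_I2 tendsto_mult_left tendsto_mult_right) auto
      show "AE x in \<mu>. norm (indicator Y x * (s i x * \<psi> x)) \<le> 2 * B * \<bar>\<psi> x\<bar>" for i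
      proof (intro AE_I2)
        fix x assume "x \<in> space \<mu>"
        then have "\<bar>s i x\<bar> * \<bar>\<psi> x\<bar> \<le> 2 * B * \<bar>\<psi> x\<bar>" using sb[of x i] spm by (intro mult_right_mono) auto
        then show "norm (indicator Y x * (s i x * \<psi> x)) \<le> 2 * B * \<bar>\<psi> x\<bar>"
          using B0 by (auto simp: indicator_def abs_mult)
      qed
    qed
    have lim2: "(\<lambda>i. \<integral>x. indicator Y x * \<bar>s i x\<bar> powr q \<partial>\<mu>) \<longlonglongrightarrow> (\<integral>x. indicator Y x * \<bar>gs x\<bar> powr q \<partial>\<mu>)"
    proof (rule integral_dominated_convergence[where w="\<lambda>x. (2 * B) powr q"])
      show "(\<lambda>x. indicator Y x * \<bar>gs x\<bar> powr q) \<in> borel_measurable \<mu>" using Yb gsm by measurable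
      show "(\<lambda>x. indicator Y x * \<bar>s i x\<bar> powr q) \<in> borel_measurable \<mu>" for i using Yb sm_i[of i] by measurable
      show "integrable \<mu> (\<lambda>x. (2 * B) powr q)" using finite_measure.integrable_const[OF fm] .
      show "AE x in \<mu>. (\<lambda>i. indicator Y x * \<bar>s i x\<bar> powr q) \<longlonglongrightarrow> indicator Y x * \<bar>gs x\<bar> powr q"
        using s(2) spS spm q1 by (intro AE_I2 tendsto_mult_left tendsto_powr' tendsto_rabs tendsto_const) auto
      show "AE x in \<mu>. norm (indicator Y x * \<bar>s i x\<bar> powr q) \<le> (2 * B) powr q" for i
      proof (intro AE_I2)
        fix x assume "x \<in> space \<mu>"
        then have "\<bar>s i x\<bar> powr q \<le> (2 * B) powr q" using sb[of x i] spm q1 by (intro powr_mono2) auto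
        then show "norm (indicator Y x * \<bar>s i x\<bar> powr q) \<le> (2 * B) powr q"
          by (auto simp: indicator_def)
      qed
    qed
    have R: "(\<lambda>i. 1/p * (\<integral>x. indicator Y x \<partial>\<nu>) + 1/q * (\<integral>x. indicator Y x * \<bar>s i x\<bar> powr q \<partial>\<mu>))
      \<longlonglongrightarrow> 1/p * (\<integral>x. indicator Y x \<partial>\<nu>) + 1/q * (\<integral>x. indicator Y x * \<bar>gs x\<bar> powr q \<partial>\<mu>)"
      by (intro tendsto_add tendsto_const tendsto_mult_left lim2)
    have ineq: "(\<integral>x. indicator Y x * (gs x * \<psi> x) \<partial>\<mu>) \<le> 1/p * (\<integral>x. indicator Y x \<partial>\<nu>) + 1/q * (\<integral>x. indicator Y x * \<bar>gs x\<bar> powr q \<partial>\<mu>)"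
      using tendsto_le[OF sequentially_bot R lim1] stepC[OF s(1) Y] by auto
    define T where "T = (\<integral>x. indicator Y x * min \<bar>\<psi> x\<bar> (real n) powr p \<partial>\<mu>)"
    have n0: "0 \<le> real n" by simp
    have T1: "(\<integral>x. indicator Y x * \<bar>gs x\<bar> powr q \<partial>\<mu>) = T" unfolding T_def gs_def m_def
      using pw_b[OF p1 n0 pq2] by simp
    have T2: "T \<le> (\<integral>x. indicator Y x * (gs x * \<psi> x) \<partial>\<mu>)" unfolding T_def
    proof (rule integral_mono)
      show "integrable \<mu> (\<lambda>x. indicator Y x * min \<bar>\<psi> x\<bar> (real n) powr p)"
      proof (rule finite_measure.integrable_const_bound[OF fm, where B="real n powr p"])
        show "AE x in \<mu>. norm (indicator Y x * min \<bar>\<psi> x\<bar> (real n) powr p) \<le> real n powr p"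
          using p1 by (intro AE_I2) (auto simp: indicator_def intro!: powr_mono2)
        show "(\<lambda>x. indicator Y x * min \<bar>\<psi> x\<bar> (real n) powr p) \<in> borel_measurable \<mu>" using Yb psim by measurable
      qed
      show "integrable \<mu> (\<lambda>x. indicator Y x * (gs x * \<psi> x))"
      proof (rule Bochner_Integration.integrable_bound[OF integrable_mult_right[OF psiabs, of B]])
        show "(\<lambda>x. indicator Y x * (gs x * \<psi> x)) \<in> borel_measurable \<mu>" using Yb gsm psim by measurable
        show "AE x in \<mu>. norm (indicator Y x * (gs x * \<psi> x)) \<le> norm (B * \<bar>\<psi> x\<bar>)"
        proof (intro AE_I2)
          fix x
          have "\<bar>gs x\<bar> * \<bar>\<psi> x\<bar> \<le> B * \<bar>\<psi> x\<bar>" using gsb[of x] by (intro mult_right_mono) auto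
          then show "norm (indicator Y x * (gs x * \<psi> x)) \<le> norm (B * \<bar>\<psi> x\<bar>)"
            using B0 by (auto simp: indicator_def abs_mult)
        qed
      qed
      show "indicator Y x * min \<bar>\<psi> x\<bar> (real n) powr p \<le> indicator Y x * (gs x * \<psi> x)" for x
        using pw_a[OF p1 n0, of "\<psi> x"] unfolding gs_def m_def by (auto simp: indicator_def)
    qed
    have f1: "T \<le> 1/p * (\<integral>x. indicator Y x \<partial>\<nu>) + 1/q * T" using ineq T1 T2 by simp
    have "1/p = 1 - 1/q" using pq by linarith
    then have e: "1/p*T = T - 1/q*T" by (simp add: left_diff_distrib)
    have "1/p * T \<le> 1/p * (\<integral>x. indicator Y x \<partial>\<nu>)" using f1 e by linarith
    then show ?thesis unfolding T_def using p1 by (simp add: divide_right_mono_neg) (smt (verit) divide_le_cancel)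
  qed
  show ?thesis
  proof
    fix X assume X: "X \<in> sets (restrict_space borel K)"
    then have XK: "X \<subseteq> K" and Xb: "X \<in> sets borel" using setsK by auto
    have Xm: "(indicator X :: 'a \<Rightarrow> real) \<in> borel_measurable \<mu>" using indm[OF Xb sm] .
    define f where "f n x = ennreal (indicator X x * min \<bar>\<psi> x\<bar> (real n) powr p)" for n x
    have inc: "incseq f"
    proof (intro monoI le_funI)
      fix a b :: nat and x assume "a \<le> b"
      then have "min \<bar>\<psi> x\<bar> (real a) powr p \<le> min \<bar>\<psi> x\<bar> (real b) powr p"
        using p1 by (intro powr_mono2) auto
      then show "f a x \<le> f b x" unfolding f_def
        by (intro ennreal_leI mult_left_mono) auto
    qed
    have fmeas: "f n \<in> borel_measurable \<mu>" for n unfolding f_def using Xm psim by measurable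
    have conv: "(\<lambda>n. f n x) \<longlonglongrightarrow> ennreal (indicator X x * \<bar>\<psi> x\<bar> powr p)" for x
    proof (rule tendsto_eventually)
      obtain N :: nat where N: "\<bar>\<psi> x\<bar> \<le> real N" using real_arch_simple by blast
      show "eventually (\<lambda>n. f n x = ennreal (indicator X x * \<bar>\<psi> x\<bar> powr p)) sequentially"
        unfolding eventually_sequentially f_def
      proof (intro exI allI impI)
        fix n assume "N \<le> n"
        then have "\<bar>\<psi> x\<bar> \<le> real n" using N by (smt (verit) of_nat_mono)
        then show "ennreal (indicator X x * min \<bar>\<psi> x\<bar> (real n) powr p) = ennreal (indicator X x * \<bar>\<psi> x\<bar> powr p)"
          by (simp add: min_absorb1)
      qed
    qed
    have lim: "(\<lambda>n. integral\<^sup>N \<mu> (f n)) \<longlonglongrightarrow> (\<integral>\<^sup>+x. ennreal (indicator X x * \<bar>\<psi> x\<bar> powr p) \<partial>\<mu>)"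
      by (rule nn_integral_LIMSEQ[OF inc fmeas conv])
    have bnd: "integral\<^sup>N \<mu> (f n) \<le> emeasure \<nu> X" for n
    proof -
      have ii: "integrable \<mu> (\<lambda>x. indicator X x * min \<bar>\<psi> x\<bar> (real n) powr p)"
      proof (rule finite_measure.integrable_const_bound[OF fm, where B="real n powr p"])
        show "AE x in \<mu>. norm (indicator X x * min \<bar>\<psi> x\<bar> (real n) powr p) \<le> real n powr p"
          using p1 by (intro AE_I2) (auto simp: indicator_def intro!: powr_mono2)
        show "(\<lambda>x. indicator X x * min \<bar>\<psi> x\<bar> (real n) powr p) \<in> borel_measurable \<mu>" using Xm psim by measurable
      qed
      have "integral\<^sup>N \<mu> (f n) = ennreal (\<integral>x. indicator X x * min \<bar>\<psi> x\<bar> (real n) powr p \<partial>\<mu>)"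
        unfolding f_def by (rule nn_integral_eq_integral[OF ii]) (auto simp: indicator_def)
      also have "\<dots> \<le> ennreal (\<integral>x. indicator X x \<partial>\<nu>)"
        by (rule ennreal_leI) (rule stepD[OF Xb])
      also have "(\<integral>x. indicator X x \<partial>\<nu>) = measure \<nu> X" using XK spn by (simp add: Int_absorb2)
      also have "ennreal (measure \<nu> X) = emeasure \<nu> X" using finite_measure.emeasure_eq_measure[OF fn] by simp
      finally show ?thesis .
    qed
    have main: "(\<integral>\<^sup>+x. ennreal (indicator X x * \<bar>\<psi> x\<bar> powr p) \<partial>\<mu>) \<le> emeasure \<nu> X"
      using LIMSEQ_le_const2[OF lim] bnd by blast
    have "(\<integral>\<^sup>+x\<in>X \<inter> msupp K \<mu>. ennreal (\<bar>\<phi>s x\<bar> powr p) \<partial>\<mu>) = (\<integral>\<^sup>+x. ennreal (indicator X x * \<bar>\<psi> x\<bar> powr p) \<partial>\<mu>)"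
      unfolding K0_def[symmetric] by (intro nn_integral_cong) (auto simp: indicator_def \<psi>_def)
    then show "(\<integral>\<^sup>+x\<in>X \<inter> msupp K \<mu>. ennreal (\<bar>\<phi>s x\<bar> powr p) \<partial>\<mu>) \<le> emeasure \<nu> X"
      using main by simp
  qed
qed

end
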